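(* Under Assumptions 1–4 below, and with $\beta\le\frac{1}{\omega+1}$, the iterates of Algorithm 2Direction satisfy, for every $t\ge0$, $$\mathbb E_t\Big[\frac1n\sum_{i=1}^n\|h_i^{t+1}-\nabla f_i(z^{t+1})\|^2\Big]\le8p\Big(1+\frac p\beta\Big)L_{\max}D_f(z^t,y^{t+1})+4p\Big(1+\frac p\beta\Big)\widehat L^2\,\mathbb E_t\|x^{t+1}-y^{t+1}\|^2+\Big(1-\frac\beta2\Big)\frac1n\sum_{i=1}^n\|h_i^t-\nabla f_i(z^t)\|^2,$$ where $D_f(x,y)=f(x)-f(y)-\langle\nabla f(y),x-y\rangle$.
   Context: Setting: $f=\frac1n\sum_{i=1}^nf_i$, $f_i:\mathbb R^d\to\mathbb R$. Assumption 1: each $f_i$ is $L_i$-smooth, $L_{\max}=\max_iL_i$, and $\widehat L>0$ satisfies $\frac1n\sum_i\|\nabla f_i(x)-\nabla f_i(y)\|^2\le\widehat L^2\|x-y\|^2$ for all $x,y$. Assumption 2: $f$ is $L$-smooth. Assumption 3: each $f_i$ is convex and $f$ is $\mu$-strongly convex ($\mu\ge0$) with minimizer $x^*$. Assumption 4: the randomness of all compressors is drawn independently (of each other, of the coins $c^t$, and of the past). Compressor classes: $\mathbb U(\omega)$ ($\omega\ge0$) = stochastic maps $\mathcal C$ with $\mathbb E\mathcal C(x)=x$, $\mathbb E\|\mathcal C(x)-x\|^2\le\omega\|x\|^2$; $\mathbb B(\alpha)$ ($\alpha\in(0,1]$) = possibly stochastic maps with $\mathbb E\|\mathcal C(x)-x\|^2\le(1-\alpha)\|x\|^2$.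 Algorithm 2Direction: compressors $\mathcal C_i^{D,y},\mathcal C_i^{D,z}\in\mathbb U(\omega)$ (workers), $\mathcal C^P\in\mathbb B(\alpha)$ (server); parameters $\bar L>0$, $\mu\ge0$, $p\in(0,1]$, $\Gamma_0\ge1$, $\tau\in(0,1]$, $x^0,h_1^0,\dots,h_n^0,k^0,v^0\in\mathbb R^d$. Set $\beta=1/(\omega+1)$, $w^0=z^0=u^0=x^0$, $h^0=\frac1n\sum_ih_i^0$, $\theta_{\min}=\frac14\min\{1,\alpha/p,\tau/p,\beta/p\}$. For $t=0,1,\dots$: let $\bar\theta_{t+1}$ be the largest root of $p\bar L\Gamma_t\theta^2+p(\bar L+\Gamma_t\mu)\theta-(\bar L+\Gamma_t\mu)=0$, $\theta_{t+1}=\min\{\bar\theta_{t+1},\theta_{\min}\}$, $\gamma_{t+1}=p\theta_{t+1}\Gamma_t/(1-p\theta_{t+1})$, $\Gamma_{t+1}=\Gamma_t+\gamma_{t+1}$; $y^{t+1}=\theta_{t+1}w^t+(1-\theta_{t+1})z^t$; $m_i^{t,y}=\mathcal C_i^{D,y}(\nabla f_i(y^{t+1})-h_i^t)$; $g^{t+1}=h^t+\frac1n\sum_im_i^{t,y}$; $u^{t+1}=\arg\min_x\{\langle g^{t+1},x\rangle+\frac{\bar L+\Gamma_t\mu}{2\gamma_{t+1}}\|x-u^t\|^2+\frac\mu2\|x-y^{t+1}\|^2\}$; $q^{t+1}=\arg\min_x\{\langle k^t,x\rangle+\frac{\bar L+\Gamma_t\mu}{2\gamma_{t+1}}\|x-w^t\|^2+\frac\mu2\|x-y^{t+1}\|^2\}$;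 $w^{t+1}=q^{t+1}+\mathcal C^P(u^{t+1}-q^{t+1})$; $x^{t+1}=\theta_{t+1}u^{t+1}+(1-\theta_{t+1})z^t$; draw $c^t\sim\mathrm{Bernoulli}(p)$, and set $(k^{t+1},z^{t+1})=(v^t,x^{t+1})$ if $c^t=1$, $(k^{t+1},z^{t+1})=(k^t,z^t)$ if $c^t=0$; $m_i^{t,z}=\mathcal C_i^{D,z}(\nabla f_i(z^{t+1})-h_i^t)$; $h_i^{t+1}=h_i^t+\beta m_i^{t,z}$; $v^{t+1}=(1-\tau)v^t+\tau(h^t+\frac1n\sum_im_i^{t,z})$; $h^{t+1}=h^t+\frac\beta n\sum_im_i^{t,z}$. $\mathbb E_t$ denotes conditional expectation given the randomness of the first $t$ iterations. *)

theory Defs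
  imports "HOL-Probability.Probability"
begin

text \<open>A stochastic map on 'a is modelled as a jointly measurable map C :: 'r => 'a => 'a
  together with the probability law Q of its random seed r; C(x) means C r x with r ~ Q.\<close>

definition unbiased_compressor ::
  "'r measure \<Rightarrow> ('r \<Rightarrow> 'a::euclidean_space \<Rightarrow> 'a) \<Rightarrow> real \<Rightarrow> bool" where
  "unbiased_compressor Q C \<omega> \<longleftrightarrow>
     \<omega> \<ge> 0 \<and> prob_space Q \<and>
     (\<lambda>(r, x). C r x) \<in> borel_measurable (Q \<Otimes>\<^sub>M borel) \<and>
     (\<forall>x. integrable Q (\<lambda>r. C r x) \<and> (\<integral>r. C r x \<partial>Q) = x \<and>
          integrable Q (\<lambda>r. (norm (C r x - x))\<^sup>2) \<and>
          (\<integral>r. (norm (C r x - x))\<^sup>2 \<partial>Q) \<le> \<omega> * (norm x)\<^sup>2)"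

definition contractive_compressor ::
  "'r measure \<Rightarrow> ('r \<Rightarrow> 'a::euclidean_space \<Rightarrow> 'a) \<Rightarrow> real \<Rightarrow> bool" where
  "contractive_compressor Q C \<alpha> \<longleftrightarrow>
     0 < \<alpha> \<and> \<alpha> \<le> 1 \<and> prob_space Q \<and>
     (\<lambda>(r, x). C r x) \<in> borel_measurable (Q \<Otimes>\<^sub>M borel) \<and>
     (\<forall>x. integrable Q (\<lambda>r. (norm (C r x - x))\<^sup>2) \<and>
          (\<integral>r. (norm (C r x - x))\<^sup>2 \<partial>Q) \<le> (1 - \<alpha>) * (norm x)\<^sup>2)"

definition avg_fun :: "nat \<Rightarrow> (nat \<Rightarrow> 'a \<Rightarrow> 'b::real_vector) \<Rightarrow> 'a \<Rightarrow> 'b" where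
  "avg_fun n g x = (1 / real n) *\<^sub>R (\<Sum>i<n. g i x)"

definition strongly_convex :: "real \<Rightarrow> ('a::real_inner \<Rightarrow> real) \<Rightarrow> bool" where
  "strongly_convex \<mu> F \<longleftrightarrow> convex_on UNIV (\<lambda>x. F x - \<mu> / 2 * (norm x)\<^sup>2)"

definition bregman :: "('a::real_inner \<Rightarrow> real) \<Rightarrow> ('a \<Rightarrow> 'a) \<Rightarrow> 'a \<Rightarrow> 'a \<Rightarrow> real" where
  "bregman F gF x y = F x - F y - gF y \<bullet> (x - y)"

record 'a alg_state =
  Gam :: real
  wv :: 'a
  zv :: 'a
  uv :: 'a
  kv :: 'a
  vv :: 'a
  hv :: "nat \<Rightarrow> 'a"
  hbar :: 'a

text \<open>Randomness of one iteration: seeds of the worker compressors C_i^{D,y} (i<n),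
  seed of the server compressor C^P, the coin c^t, seeds of C_i^{D,z} (i<n).\<close>
type_synonym 'r seeds = "(nat \<Rightarrow> 'r) \<times> 'r \<times> bool \<times> (nat \<Rightarrow> 'r)"

definition step_measure ::
  "nat \<Rightarrow> (nat \<Rightarrow> 'r measure) \<Rightarrow> 'r measure \<Rightarrow> real \<Rightarrow> (nat \<Rightarrow> 'r measure) \<Rightarrow> 'r seeds measure" where
  "step_measure n Qy QP p Qz =
     PiM {..<n} Qy \<Otimes>\<^sub>M QP \<Otimes>\<^sub>M measure_pmf (bernoulli_pmf p) \<Otimes>\<^sub>M PiM {..<n} Qz"

definition theta_min :: "real \<Rightarrow> real \<Rightarrow> real \<Rightarrow> real \<Rightarrow> real" where
  "theta_min \<alpha> \<tau> \<beta> p = 1/4 * min 1 (min (\<alpha>/p) (min (\<tau>/p) (\<beta>/p)))"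

definition theta_next :: "real \<Rightarrow> real \<Rightarrow> real \<Rightarrow> real \<Rightarrow> real \<Rightarrow> real" where
  "theta_next Lb \<mu> p \<Gamma> thmin =
     min (GREATEST \<theta>::real. p * Lb * \<Gamma> * \<theta>\<^sup>2 + p * (Lb + \<Gamma> * \<mu>) * \<theta> - (Lb + \<Gamma> * \<mu>) = 0) thmin"

text \<open>y^{t+1}, which is determined by the state at time t.\<close>
definition y_next :: "real \<Rightarrow> real \<Rightarrow> real \<Rightarrow> real \<Rightarrow> real \<Rightarrow> real \<Rightarrow> 'a::euclidean_space alg_state \<Rightarrow> 'a" where
  "y_next Lb \<mu> p \<tau> \<beta> \<alpha> s =
     (let \<theta> = theta_next Lb \<mu> p (Gam s) (theta_min \<alpha> \<tau> \<beta> p)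
      in \<theta> *\<^sub>R wv s + (1 - \<theta>) *\<^sub>R zv s)"

text \<open>One iteration. Returns (state at t+1, x^{t+1}, y^{t+1}).\<close>
definition alg_step ::
  "nat \<Rightarrow> (nat \<Rightarrow> 'a::euclidean_space \<Rightarrow> 'a) \<Rightarrow>
   (nat \<Rightarrow> 'r \<Rightarrow> 'a \<Rightarrow> 'a) \<Rightarrow> (nat \<Rightarrow> 'r \<Rightarrow> 'a \<Rightarrow> 'a) \<Rightarrow> ('r \<Rightarrow> 'a \<Rightarrow> 'a) \<Rightarrow>
   real \<Rightarrow> real \<Rightarrow> real \<Rightarrow> real \<Rightarrow> real \<Rightarrow> real \<Rightarrow>
   'a alg_state \<Rightarrow> 'r seeds \<Rightarrow> 'a alg_state \<times> 'a \<times> 'a" where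
  "alg_step n gf CDy CDz CP Lb \<mu> p \<tau> \<beta> \<alpha> s \<xi> =
    (case \<xi> of (ry, rP, c, rz) \<Rightarrow>
     let \<Gamma> = Gam s;
         \<theta> = theta_next Lb \<mu> p \<Gamma> (theta_min \<alpha> \<tau> \<beta> p);
         \<gamma> = p * \<theta> * \<Gamma> / (1 - p * \<theta>);
         y = y_next Lb \<mu> p \<tau> \<beta> \<alpha> s;
         g = hbar s + (1 / real n) *\<^sub>R (\<Sum>i<n. CDy i (ry i) (gf i y - hv s i));
         u' = (ARG_MIN (\<lambda>x. g \<bullet> x + (Lb + \<Gamma> * \<mu>) / (2 * \<gamma>) * (norm (x - uv s))\<^sup>2
                              + \<mu> / 2 * (norm (x - y))\<^sup>2) x. True);
         q = (ARG_MIN (\<lambda>x. kv s \<bullet> x + (Lb + \<Gamma> * \<mu>) / (2 * \<gamma>) * (norm (x - wv s))\<^sup>2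
                              + \<mu> / 2 * (norm (x - y))\<^sup>2) x. True);
         w' = q + CP rP (u' - q);
         x' = \<theta> *\<^sub>R u' + (1 - \<theta>) *\<^sub>R zv s;
         k' = (if c then vv s else kv s);
         z' = (if c then x' else zv s);
         mz = (\<lambda>i. CDz i (rz i) (gf i z' - hv s i));
         h' = (\<lambda>i. hv s i + \<beta> *\<^sub>R mz i);
         v' = (1 - \<tau>) *\<^sub>R vv s + \<tau> *\<^sub>R (hbar s + (1 / real n) *\<^sub>R (\<Sum>i<n. mz i));
         hb' = hbar s + (\<beta> / real n) *\<^sub>R (\<Sum>i<n. mz i)
     in (\<lparr>Gam = \<Gamma> + \<gamma>, wv = w', zv = z', uv = u', kv = k', vv = v', hv = h', hbar = hb'\<rparr>,
         x', y))"

definition alg_init :: "nat \<Rightarrow> real \<Rightarrow> 'a::euclidean_space \<Rightarrow> (nat \<Rightarrow> 'a) \<Rightarrow> 'a \<Rightarrow> 'a \<Rightarrow> 'a alg_state" where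
  "alg_init n \<Gamma>0 x0 h0 k0 v0 =
     \<lparr>Gam = \<Gamma>0, wv = x0, zv = x0, uv = x0, kv = k0, vv = v0, hv = h0,
      hbar = (1 / real n) *\<^sub>R (\<Sum>i<n. h0 i)\<rparr>"

primrec alg_run ::
  "nat \<Rightarrow> (nat \<Rightarrow> 'a::euclidean_space \<Rightarrow> 'a) \<Rightarrow>
   (nat \<Rightarrow> 'r \<Rightarrow> 'a \<Rightarrow> 'a) \<Rightarrow> (nat \<Rightarrow> 'r \<Rightarrow> 'a \<Rightarrow> 'a) \<Rightarrow> ('r \<Rightarrow> 'a \<Rightarrow> 'a) \<Rightarrow>
   real \<Rightarrow> real \<Rightarrow> real \<Rightarrow> real \<Rightarrow> real \<Rightarrow> real \<Rightarrow>
   'a alg_state \<Rightarrow> (nat \<Rightarrow> 'r seeds) \<Rightarrow> nat \<Rightarrow> 'a alg_state" where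
  "alg_run n gf CDy CDz CP Lb \<mu> p \<tau> \<beta> \<alpha> s0 \<Xi> 0 = s0"
| "alg_run n gf CDy CDz CP Lb \<mu> p \<tau> \<beta> \<alpha> s0 \<Xi> (Suc t) =
     fst (alg_step n gf CDy CDz CP Lb \<mu> p \<tau> \<beta> \<alpha> (alg_run n gf CDy CDz CP Lb \<mu> p \<tau> \<beta> \<alpha> s0 \<Xi> t) (\<Xi> t))"

end

theory Submission
  imports Defs
begin

lemma greatest_root_pos:
  fixes a B b :: real assumes a: "a>0" and B: "B>0" and b: "b>0"
  shows "(GREATEST \<theta>::real. a*\<theta>\<^sup>2 + B*\<theta> - b = 0) > 0"
proof -
  define s where "s = sqrt (B\<^sup>2 + 4*a*b)"
  define r where "r = (s - B) / (2*a)"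
  have s2: "s\<^sup>2 = B\<^sup>2 + 4*a*b" unfolding s_def using a b B by simp
  have "sqrt (B\<^sup>2) < s" unfolding s_def using a b
    by (intro real_sqrt_less_mono) simp
  then have sB: "s > B" using B by simp
  have rpos: "r > 0" unfolding r_def using sB a by simp
  have root: "a*r\<^sup>2 + B*r - b = 0"
  proof -
    have "a*r\<^sup>2 + B*r - b = ((s-B)\<^sup>2 + 2*B*(s-B) - 4*a*b) / (4*a)"
      unfolding r_def using a by (simp add: field_simps power2_eq_square)
    also have "(s-B)\<^sup>2 + 2*B*(s-B) - 4*a*b = s\<^sup>2 - B\<^sup>2 - 4*a*b" by (simp add: power2_eq_square algebra_simps)
    finally show ?thesis using s2 by simp
  qed
  have le: "\<theta> \<le> r" if h: "a*\<theta>\<^sup>2 + B*\<theta> - b = 0" for \<theta>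
  proof (rule ccontr)
    assume "\<not> \<theta> \<le> r"
    then have "\<theta> > r" by simp
    then have "(\<theta> - r) * (a*(\<theta>+r) + B) > 0" using a B rpos
      by (intro mult_pos_pos) (auto intro: add_pos_pos)
    moreover have "(\<theta> - r) * (a*(\<theta>+r) + B) = (a*\<theta>\<^sup>2 + B*\<theta> - b) - (a*r\<^sup>2 + B*r - b)"
      by (simp add: power2_eq_square algebra_simps)
    ultimately show False using h root by simp
  qed
  have "(GREATEST \<theta>::real. a*\<theta>\<^sup>2 + B*\<theta> - b = 0) = r"
    by (rule Greatest_equality) (use root le in auto)
  then show ?thesis using rpos by simp
qed


lemma line_deriv:
  fixes F :: "'a::euclidean_space \<Rightarrow> real"
  assumes "\<And>x. (F has_derivative (\<lambda>h. G x \<bullet> h)) (at x)"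
  shows "((\<lambda>t. F (y + t *\<^sub>R d)) has_real_derivative (G (y + t *\<^sub>R d) \<bullet> d)) (at t)"
proof -
  have f: "((\<lambda>t. y + t *\<^sub>R d) has_derivative (\<lambda>h. h *\<^sub>R d)) (at t)"
    by (auto intro!: derivative_eq_intros)
  have "((\<lambda>t. F (y + t *\<^sub>R d)) has_derivative (\<lambda>h. G (y + t *\<^sub>R d) \<bullet> (h *\<^sub>R d))) (at t)"
    by (rule has_derivative_compose[OF f assms])
  moreover have "(\<lambda>h. G (y + t *\<^sub>R d) \<bullet> (h *\<^sub>R d)) = (*) (G (y + t *\<^sub>R d) \<bullet> d)"
    by (auto simp: fun_eq_iff)
  ultimately show ?thesis unfolding has_field_derivative_def by simp
qed

lemma tangent_ineq:
  fixes F :: "'a::euclidean_space \<Rightarrow> real"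
  assumes cvx: "convex_on UNIV F" and der: "\<And>x. (F has_derivative (\<lambda>h. G x \<bullet> h)) (at x)"
  shows "F y + G y \<bullet> (w - y) \<le> F w"
proof -
  define d where "d = w - y"
  define \<psi> where "\<psi> t = F (y + t *\<^sub>R d)" for t
  have "convex_on UNIV \<psi>"
  proof (rule convex_onI)
    fix u a b :: real assume u: "u > 0" "u < 1"
    have "y + ((1 - u) *\<^sub>R a + u *\<^sub>R b) *\<^sub>R d = (1 - u) *\<^sub>R (y + a *\<^sub>R d) + u *\<^sub>R (y + b *\<^sub>R d)"
      by (simp add: algebra_simps)
    then show "\<psi> ((1 - u) *\<^sub>R a + u *\<^sub>R b) \<le> (1 - u) * \<psi> a + u * \<psi> b"
      unfolding \<psi>_def using convex_onD[OF cvx, of u "y + a *\<^sub>R d" "y + b *\<^sub>R d"] u by simp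
  qed simp
  moreover have "(\<psi> has_field_derivative (G y \<bullet> d)) (at 0 within UNIV)"
    unfolding \<psi>_def using line_deriv[OF der, of y d 0] by simp
  ultimately have "\<psi> 1 - \<psi> 0 \<ge> (G y \<bullet> d) * (1 - 0)"
    by (intro convex_on_imp_above_tangent[where A=UNIV]) auto
  then show ?thesis unfolding \<psi>_def d_def by simp
qed

lemma descent_ineq:
  fixes F :: "'a::euclidean_space \<Rightarrow> real"
  assumes der: "\<And>x. (F has_derivative (\<lambda>h. G x \<bullet> h)) (at x)"
    and lip: "\<And>x y. norm (G x - G y) \<le> K * norm (x - y)"
  shows "F y \<le> F x + G x \<bullet> (y - x) + K / 2 * (norm (y - x))\<^sup>2"
proof -
  define d where "d = y - x"
  define \<phi> where "\<phi> t = F (x + t *\<^sub>R d) - t * (G x \<bullet> d) - K / 2 * t\<^sup>2 * (norm d)\<^sup>2" for t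
  have "\<phi> 1 \<le> \<phi> 0"
  proof (rule DERIV_nonpos_imp_nonincreasing[of 0 1 \<phi>])
    fix t :: real assume t: "0 \<le> t" "t \<le> 1"
    have D: "(\<phi> has_real_derivative (G (x + t *\<^sub>R d) \<bullet> d - G x \<bullet> d - K / 2 * (2 * t) * (norm d)\<^sup>2)) (at t)"
      unfolding \<phi>_def
      by (rule line_deriv[OF der] derivative_eq_intros refl | simp)+
    have "G (x + t *\<^sub>R d) \<bullet> d - G x \<bullet> d = (G (x + t *\<^sub>R d) - G x) \<bullet> d"
      by (simp add: inner_diff_left)
    also have "\<dots> \<le> norm (G (x + t *\<^sub>R d) - G x) * norm d" by (rule norm_cauchy_schwarz)
    also have "\<dots> \<le> (K * norm (t *\<^sub>R d)) * norm d"
      using lip[of "x + t *\<^sub>R d" x] by (intro mult_right_mono) auto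
    also have "\<dots> = K * t * (norm d)\<^sup>2" using t by (simp add: power2_eq_square)
    finally have "G (x + t *\<^sub>R d) \<bullet> d - G x \<bullet> d - K / 2 * (2 * t) * (norm d)\<^sup>2 \<le> 0" by simp
    with D show "\<exists>y. (\<phi> has_real_derivative y) (at t) \<and> y \<le> 0" by blast
  qed simp
  then show ?thesis unfolding \<phi>_def d_def by simp
qed

lemma cocoercive:
  fixes F :: "'a::euclidean_space \<Rightarrow> real"
  assumes cvx: "convex_on UNIV F" and der: "\<And>x. (F has_derivative (\<lambda>h. G x \<bullet> h)) (at x)"
    and lip: "\<And>x y. norm (G x - G y) \<le> K * norm (x - y)" and K: "K \<ge> 0"
  shows "(norm (G x - G y))\<^sup>2 \<le> 2 * K * (F x - F y - G y \<bullet> (x - y))"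
proof (cases "K = 0")
  case True
  then show ?thesis using lip[of x y] by simp
next
  case False
  with K have K: "K > 0" by simp
  define v where "v = G x - G y"
  define w where "w = x - (1/K) *\<^sub>R v"
  have d1: "F w \<le> F x + G x \<bullet> (w - x) + K / 2 * (norm (w - x))\<^sup>2"
    by (rule descent_ineq[OF der lip])
  have t1: "F y + G y \<bullet> (w - y) \<le> F w" by (rule tangent_ineq[OF cvx der])
  have e1: "G x \<bullet> (w - x) = - (1/K) * (G x \<bullet> v)" unfolding w_def by (simp add: inner_diff_right)
  have e2: "(norm (w - x))\<^sup>2 = (1/K)\<^sup>2 * (v \<bullet> v)" unfolding w_def
    by (simp add: power_mult_distrib power_divide flip: power2_norm_eq_inner)
  have e3: "G y \<bullet> (w - y) = G y \<bullet> (x - y) - (1/K) * (G y \<bullet> v)" unfolding w_def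
    by (simp add: inner_diff_right algebra_simps)
  have e4: "G x \<bullet> v - G y \<bullet> v = v \<bullet> v" unfolding v_def by (simp add: inner_diff_left inner_commute)
  from d1 t1 e1 e2 e3 have "F y + G y \<bullet> (x - y) - (1/K) * (G y \<bullet> v) \<le> F x - (1/K) * (G x \<bullet> v) + K/2 * (1/K)\<^sup>2 * (v \<bullet> v)"
    by simp
  then have "(1/K) * (G x \<bullet> v - G y \<bullet> v) - K/2 * (1/K)\<^sup>2 * (v \<bullet> v) \<le> F x - F y - G y \<bullet> (x - y)"
    by (simp add: algebra_simps)
  then have "(1/(2*K)) * (v \<bullet> v) \<le> F x - F y - G y \<bullet> (x - y)"
    using K e4 by (simp add: power2_eq_square field_simps)
  then have "v \<bullet> v \<le> 2 * K * (F x - F y - G y \<bullet> (x - y))"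
    using K by (simp add: field_simps)
  then show ?thesis unfolding v_def by (simp add: power2_norm_eq_inner)
qed


lemma argmin_closed:
  fixes g u y :: "'a::real_inner" and c \<mu> :: real
  assumes c: "c > 0" and mu: "\<mu> \<ge> 0"
  shows "(ARG_MIN (\<lambda>x. g \<bullet> x + c * (norm (x - u))\<^sup>2 + \<mu> / 2 * (norm (x - y))\<^sup>2) x. True)
         = (1 / (2 * c + \<mu>)) *\<^sub>R ((2 * c) *\<^sub>R u + \<mu> *\<^sub>R y - g)"
proof -
  define \<phi> where "\<phi> x = g \<bullet> x + c * (norm (x - u))\<^sup>2 + \<mu> / 2 * (norm (x - y))\<^sup>2" for x
  define k where "k = 2 * c + \<mu>"
  define v where "v = (2 * c) *\<^sub>R u + \<mu> *\<^sub>R y - g"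
  define m where "m = (1 / k) *\<^sub>R v"
  have k: "k > 0" unfolding k_def using c mu by simp
  have km: "k *\<^sub>R m = v" unfolding m_def using k by simp
  define C0 where "C0 = c * (u \<bullet> u) + \<mu> / 2 * (y \<bullet> y) - k / 2 * (m \<bullet> m)"
  have id: "\<phi> x = k / 2 * (norm (x - m))\<^sup>2 + C0" for x
  proof -
    have "\<phi> x = k / 2 * (x \<bullet> x) - x \<bullet> v + c * (u \<bullet> u) + \<mu> / 2 * (y \<bullet> y)"
      unfolding \<phi>_def v_def k_def
      by (simp add: power2_norm_eq_inner inner_diff_left inner_diff_right inner_add_right inner_commute algebra_simps)
    moreover have "k / 2 * (norm (x - m))\<^sup>2 = k / 2 * (x \<bullet> x) - x \<bullet> (k *\<^sub>R m) + k / 2 * (m \<bullet> m)"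
      by (simp add: power2_norm_eq_inner inner_diff_left inner_diff_right inner_commute algebra_simps)
    ultimately show ?thesis unfolding C0_def km by (simp add: field_simps)
  qed
  have uniq: "z = m" if "is_arg_min \<phi> (\<lambda>x. True) z" for z
  proof -
    from that have "\<not> \<phi> m < \<phi> z" unfolding is_arg_min_def by blast
    then have "k / 2 * (norm (z - m))\<^sup>2 \<le> 0" using id[of z] id[of m] by simp
    then have "(norm (z - m))\<^sup>2 \<le> 0" using k by (simp add: mult_le_0_iff)
    then show ?thesis by simp
  qed
  have ex: "is_arg_min \<phi> (\<lambda>x. True) m"
    unfolding is_arg_min_def using id k by (auto simp: not_less)
  have "arg_min \<phi> (\<lambda>x. True) = m"
    unfolding arg_min_def using ex uniq by (rule someI2)
  then show ?thesis unfolding \<phi>_def m_def v_def k_def by simp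
qed

lemma young_sq:
  fixes a b :: "'a::real_normed_vector" and e :: real
  assumes e: "e > 0"
  shows "(norm (a + b))\<^sup>2 \<le> (1 + e) * (norm a)\<^sup>2 + (1 + 1/e) * (norm b)\<^sup>2"
proof -
  have "(norm (a + b))\<^sup>2 \<le> (norm a + norm b)\<^sup>2"
    by (simp add: norm_triangle_ineq power_mono)
  also have "\<dots> \<le> (1 + e) * (norm a)\<^sup>2 + (1 + 1/e) * (norm b)\<^sup>2"
  proof -
    have "0 \<le> (e * norm a - norm b)\<^sup>2 / e" using e by simp
    also have "(e * norm a - norm b)\<^sup>2 / e = e * (norm a)\<^sup>2 + (norm b)\<^sup>2 / e - 2 * norm a * norm b"
      using e by (simp add: power2_eq_square field_simps)
    finally show ?thesis by (simp add: power2_eq_square algebra_simps)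
  qed
  finally show ?thesis .
qed

lemma sq_le_2:
  fixes a b :: "'a::real_normed_vector"
  shows "(norm (a + b))\<^sup>2 \<le> 2 * (norm a)\<^sup>2 + 2 * (norm b)\<^sup>2"
  using young_sq[of 1 a b] by simp


lemma step_eqs:
  fixes s :: "'a::euclidean_space alg_state" and Lb \<mu> p \<tau> \<beta> \<alpha> :: real and n :: nat
    and gf :: "nat \<Rightarrow> 'a \<Rightarrow> 'a" and CDy CDz :: "nat \<Rightarrow> 'r \<Rightarrow> 'a \<Rightarrow> 'a"
    and ry rz :: "nat \<Rightarrow> 'r" and c :: bool
  assumes "\<xi> = (ry, rP, c, rz)"
    and "\<theta> = theta_next Lb \<mu> p (Gam s) (theta_min \<alpha> \<tau> \<beta> p)"
    and "\<gamma> = p * \<theta> * Gam s / (1 - p * \<theta>)"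
    and "y = y_next Lb \<mu> p \<tau> \<beta> \<alpha> s"
    and "g = hbar s + (1 / real n) *\<^sub>R (\<Sum>i<n. CDy i (ry i) (gf i y - hv s i))"
    and "u' = (ARG_MIN (\<lambda>x. g \<bullet> x + (Lb + Gam s * \<mu>) / (2 * \<gamma>) * (norm (x - uv s))\<^sup>2 + \<mu> / 2 * (norm (x - y))\<^sup>2) x. True)"
    and "x' = \<theta> *\<^sub>R u' + (1 - \<theta>) *\<^sub>R zv s"
    and "z' = (if c then x' else zv s)"
  shows "fst (snd (alg_step n gf CDy CDz CP Lb \<mu> p \<tau> \<beta> \<alpha> s \<xi>)) = x'"
    "zv (fst (alg_step n gf CDy CDz CP Lb \<mu> p \<tau> \<beta> \<alpha> s \<xi>)) = z'"
    "hv (fst (alg_step n gf CDy CDz CP Lb \<mu> p \<tau> \<beta> \<alpha> s \<xi>)) = (\<lambda>i. hv s i + \<beta> *\<^sub>R CDz i (rz i) (gf i z' - hv s i))"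
    "Gam (fst (alg_step n gf CDy CDz CP Lb \<mu> p \<tau> \<beta> \<alpha> s \<xi>)) = Gam s + \<gamma>"
  unfolding assms alg_step_def Let_def by simp_all

lemma theta_min_props:
  assumes "\<alpha> > 0" "\<tau> > 0" "\<beta> > 0" "p > 0"
  shows "0 < theta_min \<alpha> \<tau> \<beta> p" "theta_min \<alpha> \<tau> \<beta> p \<le> 1/4"
  using assms unfolding theta_min_def by auto

lemma theta_props:
  assumes G: "\<Gamma> > 0" and Lb: "Lb > 0" and mu: "\<mu> \<ge> 0" and p: "p > 0" and tm: "tm > 0" "tm \<le> 1/4"
  shows "0 < theta_next Lb \<mu> p \<Gamma> tm" "theta_next Lb \<mu> p \<Gamma> tm \<le> 1/4"
proof -
  have "(GREATEST \<theta>::real. p * Lb * \<Gamma> * \<theta>\<^sup>2 + p * (Lb + \<Gamma> * \<mu>) * \<theta> - (Lb + \<Gamma> * \<mu>) = 0) > 0"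
  proof -
    have h: "0 < Lb + \<Gamma> * \<mu>" using G Lb mu by (simp add: add_pos_nonneg)
    show ?thesis using h G Lb p by (intro greatest_root_pos) auto
  qed
  then show "0 < theta_next Lb \<mu> p \<Gamma> tm" "theta_next Lb \<mu> p \<Gamma> tm \<le> 1/4"
    unfolding theta_next_def using tm by auto
qed


lemma sq_expand:
  fixes d e :: "'a::real_inner"
  shows "(norm (a *\<^sub>R d - b *\<^sub>R e))\<^sup>2 = a\<^sup>2 * (norm d)\<^sup>2 - 2 * a * b * (d \<bullet> e) + b\<^sup>2 * (norm e)\<^sup>2"
  by (simp only: power2_norm_eq_inner) (simp add: inner_diff_left inner_diff_right inner_commute power2_eq_square algebra_simps)

lemma compressor_var:
  fixes C :: "'r \<Rightarrow> 'a::euclidean_space \<Rightarrow> 'a"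
  assumes U: "unbiased_compressor Q C \<omega>" and b: "0 < \<beta>" "\<beta> \<le> 1 / (\<omega> + 1)"
  shows "integrable Q (\<lambda>r. (norm (\<beta> *\<^sub>R C r e - e))\<^sup>2)"
    "(\<integral>r. (norm (\<beta> *\<^sub>R C r e - e))\<^sup>2 \<partial>Q) \<le> (1 - \<beta>) * (norm e)\<^sup>2"
proof -
  have om: "\<omega> \<ge> 0" and P: "prob_space Q" and iC: "integrable Q (\<lambda>r. C r e)"
    and EC: "(\<integral>r. C r e \<partial>Q) = e" and iV: "integrable Q (\<lambda>r. (norm (C r e - e))\<^sup>2)"
    and V: "(\<integral>r. (norm (C r e - e))\<^sup>2 \<partial>Q) \<le> \<omega> * (norm e)\<^sup>2"
    using U unfolding unbiased_compressor_def by auto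
  interpret prob_space Q by (rule P)
  have id: "(norm (\<beta> *\<^sub>R C r e - e))\<^sup>2 = \<beta>\<^sup>2 * (norm (C r e - e))\<^sup>2 - 2 * \<beta> * (1 - \<beta>) * ((C r e - e) \<bullet> e) + (1 - \<beta>)\<^sup>2 * (norm e)\<^sup>2" for r
  proof -
    have "\<beta> *\<^sub>R C r e - e = \<beta> *\<^sub>R (C r e - e) - (1 - \<beta>) *\<^sub>R e" by (simp add: algebra_simps)
    then show ?thesis using sq_expand[of \<beta> "C r e - e" "1 - \<beta>" e] by simp
  qed
  have iD: "integrable Q (\<lambda>r. C r e - e)" using iC by simp
  have iI: "integrable Q (\<lambda>r. (C r e - e) \<bullet> e)" using iD by simp
  have EI: "(\<integral>r. (C r e - e) \<bullet> e \<partial>Q) = 0"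
  proof -
    have "(\<integral>r. (C r e - e) \<bullet> e \<partial>Q) = (\<integral>r. C r e - e \<partial>Q) \<bullet> e" using iD by simp
    also have "(\<integral>r. C r e - e \<partial>Q) = 0" using iC EC by (simp add: prob_space)
    finally show ?thesis by simp
  qed
  have iR: "integrable Q (\<lambda>r. \<beta>\<^sup>2 * (norm (C r e - e))\<^sup>2 - 2 * \<beta> * (1 - \<beta>) * ((C r e - e) \<bullet> e) + (1 - \<beta>)\<^sup>2 * (norm e)\<^sup>2)"
    using iV iI by (intro Bochner_Integration.integrable_add Bochner_Integration.integrable_diff integrable_mult_right integrable_const)
  then show "integrable Q (\<lambda>r. (norm (\<beta> *\<^sub>R C r e - e))\<^sup>2)" by (simp only: id)
  have "(\<integral>r. (norm (\<beta> *\<^sub>R C r e - e))\<^sup>2 \<partial>Q) = \<beta>\<^sup>2 * (\<integral>r. (norm (C r e - e))\<^sup>2 \<partial>Q) + (1 - \<beta>)\<^sup>2 * (norm e)\<^sup>2"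
    unfolding id using iV iI EI by (simp add: prob_space)
  also have "\<dots> \<le> \<beta>\<^sup>2 * (\<omega> * (norm e)\<^sup>2) + (1 - \<beta>)\<^sup>2 * (norm e)\<^sup>2"
    using V by (intro add_right_mono mult_left_mono) auto
  also have "\<dots> = (\<beta> * (\<beta> * (\<omega> + 1)) - 2 * \<beta> + 1) * (norm e)\<^sup>2" by (simp add: power2_eq_square algebra_simps)
  also have "\<dots> \<le> (\<beta> * 1 - 2 * \<beta> + 1) * (norm e)\<^sup>2"
  proof -
    have "\<beta> * (\<omega> + 1) \<le> 1" using b om by (simp add: field_simps)
    then show ?thesis using b by (intro mult_right_mono) auto
  qed
  finally show "(\<integral>r. (norm (\<beta> *\<^sub>R C r e - e))\<^sup>2 \<partial>Q) \<le> (1 - \<beta>) * (norm e)\<^sup>2" by simp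
qed

lemma nn_integral_PiM_comp:
  assumes P: "\<And>i. i \<in> I \<Longrightarrow> prob_space (M i)" and i: "i \<in> I" and f: "f \<in> borel_measurable (M i)"
  shows "(\<integral>\<^sup>+\<omega>. f (\<omega> i) \<partial>PiM I M) = (\<integral>\<^sup>+x. f x \<partial>M i)"
proof -
  have m: "(\<lambda>\<omega>. \<omega> i) \<in> measurable (PiM I M) (M i)" using i by measurable
  have "(\<integral>\<^sup>+x. f x \<partial>M i) = (\<integral>\<^sup>+x. f x \<partial>distr (PiM I M) (M i) (\<lambda>\<omega>. \<omega> i))"
    using distr_PiM_component[where I=I and M=M and i=i, OF P i] by simp
  also have "\<dots> = (\<integral>\<^sup>+\<omega>. f (\<omega> i) \<partial>PiM I M)"
    using f distr_PiM_component[where I=I and M=M and i=i, OF P i] by (subst nn_integral_distr[OF m]) auto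
  finally show ?thesis by simp
qed

lemma integrable_PiM_comp:
  fixes f :: "'b \<Rightarrow> 'c::{banach, second_countable_topology}"
  assumes P: "\<And>i. i \<in> I \<Longrightarrow> prob_space (M i)" and i: "i \<in> I" and f: "integrable (M i) f"
  shows "integrable (PiM I M) (\<lambda>\<omega>. f (\<omega> i))"
proof -
  have m: "(\<lambda>\<omega>. \<omega> i) \<in> measurable (PiM I M) (M i)" using i by measurable
  have fm: "f \<in> borel_measurable (M i)" using f by auto
  have "integrable (distr (PiM I M) (M i) (\<lambda>\<omega>. \<omega> i)) f"
    using distr_PiM_component[where I=I and M=M and i=i, OF P i] f by simp
  then show ?thesis using integrable_distr_eq[OF m fm] by simp
qed

lemma integrable_pair_fst:
  fixes f :: "'b \<Rightarrow> 'c::{banach, second_countable_topology}"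
  assumes P: "prob_space B" and f: "integrable A f"
  shows "integrable (A \<Otimes>\<^sub>M B) (\<lambda>x. f (fst x))"
proof -
  have m: "fst \<in> measurable (A \<Otimes>\<^sub>M B) A" by measurable
  have fm: "f \<in> borel_measurable A" using f by auto
  have "integrable (distr (A \<Otimes>\<^sub>M B) A fst) f"
    using prob_space.distr_pair_fst[OF P, of A] f by simp
  then show ?thesis using integrable_distr_eq[OF m fm] by simp
qed


lemma sq_integrable_add:
  fixes f g :: "'b \<Rightarrow> 'c::euclidean_space"
  assumes [measurable]: "f \<in> borel_measurable M" "g \<in> borel_measurable M"
    and "integrable M (\<lambda>x. (norm (f x))\<^sup>2)" "integrable M (\<lambda>x. (norm (g x))\<^sup>2)"
  shows "integrable M (\<lambda>x. (norm (f x + g x))\<^sup>2)"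
proof (rule Bochner_Integration.integrable_bound[where f="\<lambda>x. 2 * (norm (f x))\<^sup>2 + 2 * (norm (g x))\<^sup>2"])
  show "integrable M (\<lambda>x. 2 * (norm (f x))\<^sup>2 + 2 * (norm (g x))\<^sup>2)"
    using assms(3,4) by (intro Bochner_Integration.integrable_add integrable_mult_right)
  show "(\<lambda>x. (norm (f x + g x))\<^sup>2) \<in> borel_measurable M" by measurable
  show "AE x in M. norm ((norm (f x + g x))\<^sup>2) \<le> norm (2 * (norm (f x))\<^sup>2 + 2 * (norm (g x))\<^sup>2)"
  proof (rule AE_I2)
    fix x
    have "(norm (f x + g x))\<^sup>2 \<le> (norm (f x) + norm (g x))\<^sup>2"
      by (simp add: norm_triangle_ineq power_mono)
    also have "\<dots> \<le> 2 * (norm (f x))\<^sup>2 + 2 * (norm (g x))\<^sup>2"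
      using sum_squares_bound[of "norm (f x)" "norm (g x)"] by (simp add: power2_eq_square algebra_simps)
    finally show "norm ((norm (f x + g x))\<^sup>2) \<le> norm (2 * (norm (f x))\<^sup>2 + 2 * (norm (g x))\<^sup>2)" by simp
  qed
qed

lemma sq_integrable_sum:
  fixes f :: "'i \<Rightarrow> 'b \<Rightarrow> 'c::euclidean_space"
  assumes "finite I" "\<And>i. i \<in> I \<Longrightarrow> f i \<in> borel_measurable M"
    "\<And>i. i \<in> I \<Longrightarrow> integrable M (\<lambda>x. (norm (f i x))\<^sup>2)"
  shows "integrable M (\<lambda>x. (norm (\<Sum>i\<in>I. f i x))\<^sup>2)"
  using assms
proof (induction I rule: finite_induct)
  case empty
  then show ?case by simp
next
  case (insert j I)
  have m: "(\<lambda>x. \<Sum>i\<in>I. f i x) \<in> borel_measurable M" using insert by (intro borel_measurable_sum) auto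
  show ?case using insert
    by (simp only: sum.insert[OF insert(1,2)]) (intro sq_integrable_add m, auto)
qed

lemma integral_PiM_comp:
  fixes f :: "'b \<Rightarrow> 'c::{banach, second_countable_topology}"
  assumes P: "\<And>i. i \<in> I \<Longrightarrow> prob_space (M i)" and i: "i \<in> I" and f: "f \<in> borel_measurable (M i)"
  shows "(\<integral>\<omega>. f (\<omega> i) \<partial>PiM I M) = (\<integral>x. f x \<partial>M i)"
proof -
  have m: "(\<lambda>\<omega>. \<omega> i) \<in> measurable (PiM I M) (M i)" using i by measurable
  show ?thesis
    using integral_distr[OF m f] distr_PiM_component[where I=I and M=M and i=i, OF P i] by simp
qed

lemma integral_pair_fst:
  fixes f :: "'b \<Rightarrow> 'c::{banach, second_countable_topology}"
  assumes P: "prob_space B" and f: "f \<in> borel_measurable A"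
  shows "(\<integral>x. f (fst x) \<partial>(A \<Otimes>\<^sub>M B)) = (\<integral>x. f x \<partial>A)"
proof -
  have m: "fst \<in> measurable (A \<Otimes>\<^sub>M B) A" by measurable
  show ?thesis using integral_distr[OF m f] prob_space.distr_pair_fst[OF P, of A] by simp
qed

lemma Zbound:
  fixes CDz :: "nat \<Rightarrow> 'r \<Rightarrow> 'a::euclidean_space \<Rightarrow> 'a"
  assumes U: "\<And>i. i < n \<Longrightarrow> unbiased_compressor (Qz i) (CDz i) \<omega>" and b: "0 < \<beta>" "\<beta> \<le> 1 / (\<omega> + 1)"
  shows "(\<integral>\<^sup>+rz. ennreal ((1 / real n) * (\<Sum>i<n. (norm (\<beta> *\<^sub>R CDz i (rz i) (E i) - E i))\<^sup>2)) \<partial>PiM {..<n} Qz)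
         \<le> ennreal ((1 - \<beta>) * ((1 / real n) * (\<Sum>i<n. (norm (E i))\<^sup>2)))"
proof -
  have P: "\<And>i. i \<in> {..<n} \<Longrightarrow> prob_space (Qz i)" using U unfolding unbiased_compressor_def by auto
  define F where "F i r = (norm (\<beta> *\<^sub>R CDz i r (E i) - E i))\<^sup>2" for i r
  have iF: "integrable (Qz i) (F i)" if "i < n" for i
    unfolding F_def using compressor_var(1)[OF U[OF that] b] .
  have bF: "(\<integral>r. F i r \<partial>Qz i) \<le> (1 - \<beta>) * (norm (E i))\<^sup>2" if "i < n" for i
    unfolding F_def using compressor_var(2)[OF U[OF that] b] .
  have iS: "integrable (PiM {..<n} Qz) (\<lambda>rz. (1 / real n) * (\<Sum>i<n. F i (rz i)))"
  proof -
    have "integrable (PiM {..<n} Qz) (\<lambda>rz. F i (rz i))" if "i \<in> {..<n}" for i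
      using iF P that by (intro integrable_PiM_comp[where I="{..<n}"]) auto
    then show ?thesis by (intro integrable_mult_right Bochner_Integration.integrable_sum)
  qed
  have "(\<integral>\<^sup>+rz. ennreal ((1 / real n) * (\<Sum>i<n. F i (rz i))) \<partial>PiM {..<n} Qz)
        = ennreal (\<integral>rz. (1 / real n) * (\<Sum>i<n. F i (rz i)) \<partial>PiM {..<n} Qz)"
    using iS by (intro nn_integral_eq_integral AE_I2) (auto simp: F_def intro!: sum_nonneg divide_nonneg_nonneg)
  also have "(\<integral>rz. (1 / real n) * (\<Sum>i<n. F i (rz i)) \<partial>PiM {..<n} Qz) = (1 / real n) * (\<Sum>i<n. \<integral>r. F i r \<partial>Qz i)"
  proof -
    have "(\<integral>rz. (1 / real n) * (\<Sum>i<n. F i (rz i)) \<partial>PiM {..<n} Qz) = (1 / real n) * (\<Sum>i<n. \<integral>rz. F i (rz i) \<partial>PiM {..<n} Qz)"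
    proof -
      have "integrable (PiM {..<n} Qz) (\<lambda>rz. F i (rz i))" if "i \<in> {..<n}" for i
        using iF P that by (intro integrable_PiM_comp[where I="{..<n}"]) auto
      then show ?thesis by (simp add: Bochner_Integration.integral_sum)
    qed
    also have "(\<Sum>i<n. \<integral>rz. F i (rz i) \<partial>PiM {..<n} Qz) = (\<Sum>i<n. \<integral>r. F i r \<partial>Qz i)"
      using iF P by (intro sum.cong refl integral_PiM_comp[where I="{..<n}"]) auto
    finally show ?thesis .
  qed
  also have "ennreal ((1 / real n) * (\<Sum>i<n. \<integral>r. F i r \<partial>Qz i)) \<le> ennreal ((1 - \<beta>) * ((1 / real n) * (\<Sum>i<n. (norm (E i))\<^sup>2)))"
  proof (rule ennreal_leI)
    have "(\<Sum>i<n. \<integral>r. F i r \<partial>Qz i) \<le> (\<Sum>i<n. (1 - \<beta>) * (norm (E i))\<^sup>2)" using bF by (intro sum_mono) auto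
    then show "(1 / real n) * (\<Sum>i<n. \<integral>r. F i r \<partial>Qz i) \<le> (1 - \<beta>) * ((1 / real n) * (\<Sum>i<n. (norm (E i))\<^sup>2))"
      by (simp add: sum_distrib_left[symmetric] divide_right_mono)
  qed
  finally show ?thesis unfolding F_def .
qed


lemma pointwise_bound:
  fixes f :: "nat \<Rightarrow> 'a::euclidean_space \<Rightarrow> real" and gf :: "nat \<Rightarrow> 'a \<Rightarrow> 'a" and h :: "nat \<Rightarrow> 'a"
  assumes n: "n \<ge> 1"
    and grad: "\<And>i x. i < n \<Longrightarrow> (f i has_derivative (\<lambda>h. gf i x \<bullet> h)) (at x)"
    and smooth_i: "\<And>i x y. i < n \<Longrightarrow> norm (gf i x - gf i y) \<le> Li i * norm (x - y)"
    and Li: "\<And>i. i < n \<Longrightarrow> Li i \<ge> 0"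
    and Lhat: "\<And>x y. (1 / real n) * (\<Sum>i<n. (norm (gf i x - gf i y))\<^sup>2) \<le> Lhat\<^sup>2 * (norm (x - y))\<^sup>2"
    and convex_i: "\<And>i. i < n \<Longrightarrow> convex_on UNIV (f i)"
    and b: "0 < \<beta>" "\<beta> \<le> 1" and p: "0 < p" "p \<le> 1"
  shows "(1 - \<beta>) * ((1 - p) * ((1 / real n) * (\<Sum>i<n. (norm (h i - gf i z))\<^sup>2))
                    + p * ((1 / real n) * (\<Sum>i<n. (norm (h i - gf i x))\<^sup>2)))
    \<le> 8 * p * (1 + p / \<beta>) * Max (Li ` {..<n}) * bregman (avg_fun n f) (avg_fun n gf) z y
      + 4 * p * (1 + p / \<beta>) * Lhat\<^sup>2 * (norm (x - y))\<^sup>2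
      + (1 - \<beta> / 2) * ((1 / real n) * (\<Sum>i<n. (norm (h i - gf i z))\<^sup>2))"
proof -
  define Lm where "Lm = Max (Li ` {..<n})"
  have LiLm: "Li i \<le> Lm" if "i < n" for i unfolding Lm_def using that by (intro Max_ge) auto
  define D where "D i = f i z - f i y - gf i y \<bullet> (z - y)" for i
  have D0: "D i \<ge> 0" if "i < n" for i
    using tangent_ineq[OF convex_i[OF that] grad[OF that], of y z] unfolding D_def by simp
  have Dbar: "bregman (avg_fun n f) (avg_fun n gf) z y = (1 / real n) * (\<Sum>i<n. D i)"
  proof -
    have "bregman (avg_fun n f) (avg_fun n gf) z y = (1/real n) * ((\<Sum>i<n. f i z) - (\<Sum>i<n. f i y) - (\<Sum>i<n. gf i y \<bullet> (z - y)))"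
      unfolding bregman_def avg_fun_def by (simp add: inner_sum_left right_diff_distrib)
    then show ?thesis by (simp add: D_def sum_subtractf)
  qed
  have gD: "(norm (gf i z - gf i y))\<^sup>2 \<le> 2 * Lm * D i" if "i < n" for i
  proof -
    have "(norm (gf i z - gf i y))\<^sup>2 \<le> 2 * Li i * D i"
      unfolding D_def by (rule cocoercive[OF convex_i[OF that] grad[OF that] smooth_i[OF that] Li[OF that]])
    also have "\<dots> \<le> 2 * Lm * D i" using LiLm[OF that] D0[OF that] by (intro mult_right_mono) auto
    finally show ?thesis .
  qed
  define e where "e = \<beta> / (2 * p)"
  have e: "e > 0" unfolding e_def using b p by simp
  define Az where "Az = (1 / real n) * (\<Sum>i<n. (norm (h i - gf i z))\<^sup>2)"
  define Ax where "Ax = (1 / real n) * (\<Sum>i<n. (norm (h i - gf i x))\<^sup>2)"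
  define Db where "Db = (1 / real n) * (\<Sum>i<n. D i)"
  define T where "T = 2 * Lhat\<^sup>2 * (norm (x - y))\<^sup>2 + 4 * Lm * Db"
  have Az0: "Az \<ge> 0" unfolding Az_def by (auto intro!: sum_nonneg divide_nonneg_nonneg)
  have Db0: "Db \<ge> 0" unfolding Db_def using D0 by (auto intro!: sum_nonneg divide_nonneg_nonneg)
  have Lm0: "Lm \<ge> 0" using LiLm[of 0] Li[of 0] n by simp
  have T0: "T \<ge> 0" unfolding T_def using Db0 Lm0 by simp
  have each: "(norm (h i - gf i x))\<^sup>2 \<le> (1 + e) * (norm (h i - gf i z))\<^sup>2
      + (1 + 1/e) * (2 * (norm (gf i x - gf i y))\<^sup>2 + 2 * (2 * Lm * D i))" if "i < n" for i
  proof -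
    have "(norm (h i - gf i x))\<^sup>2 \<le> (1 + e) * (norm (h i - gf i z))\<^sup>2 + (1 + 1/e) * (norm (gf i z - gf i x))\<^sup>2"
      using young_sq[OF e, of "h i - gf i z" "gf i z - gf i x"] by simp
    also have "(norm (gf i z - gf i x))\<^sup>2 \<le> 2 * (norm (gf i x - gf i y))\<^sup>2 + 2 * (2 * Lm * D i)"
    proof -
      have "(norm (gf i z - gf i x))\<^sup>2 \<le> 2 * (norm (gf i z - gf i y))\<^sup>2 + 2 * (norm (gf i y - gf i x))\<^sup>2"
        using sq_le_2[of "gf i z - gf i y" "gf i y - gf i x"] by simp
      then show ?thesis using gD[OF that] by (simp add: norm_minus_commute)
    qed
    then have "(1 + 1/e) * (norm (gf i z - gf i x))\<^sup>2 \<le> (1 + 1/e) * (2 * (norm (gf i x - gf i y))\<^sup>2 + 2 * (2 * Lm * D i))"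
      using e by (intro mult_left_mono) auto
    finally show ?thesis by simp
  qed
  have "Ax \<le> (1 / real n) * (\<Sum>i<n. (1 + e) * (norm (h i - gf i z))\<^sup>2
      + (1 + 1/e) * (2 * (norm (gf i x - gf i y))\<^sup>2 + 2 * (2 * Lm * D i)))"
    unfolding Ax_def using each by (intro mult_left_mono sum_mono) auto
  also have "\<dots> = (1 / real n) * ((1 + e) * (\<Sum>i<n. (norm (h i - gf i z))\<^sup>2) + (2 * (1 + 1/e)) * (\<Sum>i<n. (norm (gf i x - gf i y))\<^sup>2) + (4 * Lm * (1 + 1/e)) * (\<Sum>i<n. D i))"
  proof -
    have "(\<Sum>i<n. (1 + e) * (norm (h i - gf i z))\<^sup>2
      + (1 + 1/e) * (2 * (norm (gf i x - gf i y))\<^sup>2 + 2 * (2 * Lm * D i)))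
      = (\<Sum>i<n. (1 + e) * (norm (h i - gf i z))\<^sup>2 + (2 * (1 + 1/e)) * (norm (gf i x - gf i y))\<^sup>2 + (4 * Lm * (1 + 1/e)) * D i)"
      by (intro sum.cong) (auto simp: algebra_simps)
    then show ?thesis by (simp add: sum.distrib sum_distrib_left[symmetric])
  qed
  also have "\<dots> = (1 + e) * Az + (1 + 1/e) * (2 * ((1 / real n) * (\<Sum>i<n. (norm (gf i x - gf i y))\<^sup>2)) + 4 * Lm * Db)"
    unfolding Az_def Db_def using e n by (simp add: field_simps)
  also have "\<dots> \<le> (1 + e) * Az + (1 + 1/e) * T"
  proof -
    have "2 * ((1 / real n) * (\<Sum>i<n. (norm (gf i x - gf i y))\<^sup>2)) + 4 * Lm * Db \<le> T"
      unfolding T_def using Lhat[of x y] by simp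
    then show ?thesis using e by (intro add_left_mono mult_left_mono) auto
  qed
  finally have AxB: "Ax \<le> (1 + e) * Az + (1 + 1/e) * T" .
  have "(1 - \<beta>) * ((1 - p) * Az + p * Ax) \<le> (1 - \<beta>) * ((1 - p) * Az + p * ((1 + e) * Az + (1 + 1/e) * T))"
    using AxB b p by (intro mult_left_mono add_left_mono) auto
  also have "\<dots> = ((1 - \<beta>) * (1 + \<beta> / 2)) * Az + ((1 - \<beta>) * p * (1 + 2 * p / \<beta>)) * T"
    unfolding e_def using b p by (simp add: field_simps)
  also have "\<dots> \<le> (1 - \<beta> / 2) * Az + (2 * p * (1 + p / \<beta>)) * T"
  proof (rule add_mono)
    have "(1 - \<beta>) * (1 + \<beta> / 2) \<le> 1 - \<beta> / 2" using b by (simp add: algebra_simps)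
    then show "((1 - \<beta>) * (1 + \<beta> / 2)) * Az \<le> (1 - \<beta> / 2) * Az" using Az0 by (rule mult_right_mono)
    have "(1 - \<beta>) * p * (1 + 2 * p / \<beta>) \<le> 1 * p * (2 + 2 * p / \<beta>)"
      using b p by (intro mult_mono) auto
    also have "\<dots> = 2 * p * (1 + p / \<beta>)" by (simp add: algebra_simps)
    finally show "((1 - \<beta>) * p * (1 + 2 * p / \<beta>)) * T \<le> (2 * p * (1 + p / \<beta>)) * T" using T0 by (rule mult_right_mono)
  qed
  also have "\<dots> = 8 * p * (1 + p / \<beta>) * Lm * Db + 4 * p * (1 + p / \<beta>) * Lhat\<^sup>2 * (norm (x - y))\<^sup>2 + (1 - \<beta> / 2) * Az"
    unfolding T_def by (simp add: algebra_simps)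
  finally show ?thesis unfolding Az_def[symmetric] Ax_def[symmetric] Lm_def[symmetric] Dbar Db_def[symmetric] .
qed


lemma main_bound:
  fixes n :: nat
    and f :: "nat \<Rightarrow> 'a::euclidean_space \<Rightarrow> real" and gf :: "nat \<Rightarrow> 'a \<Rightarrow> 'a"
    and Li :: "nat \<Rightarrow> real" and Lhat \<mu> :: real
    and Qy Qz :: "nat \<Rightarrow> 'r measure" and QP :: "'r measure"
    and CDy CDz :: "nat \<Rightarrow> 'r \<Rightarrow> 'a \<Rightarrow> 'a" and CP :: "'r \<Rightarrow> 'a \<Rightarrow> 'a"
    and \<omega> \<alpha> Lb p \<tau> \<beta> :: real and s :: "'a alg_state"
  assumes n_pos: "n \<ge> 1"
    and grad: "\<And>i x. i < n \<Longrightarrow> (f i has_derivative (\<lambda>h. gf i x \<bullet> h)) (at x)"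
    and smooth_i: "\<And>i x y. i < n \<Longrightarrow> norm (gf i x - gf i y) \<le> Li i * norm (x - y)"
    and Li: "\<And>i. i < n \<Longrightarrow> Li i \<ge> 0"
    and Lhat: "\<And>x y. (1 / real n) * (\<Sum>i<n. (norm (gf i x - gf i y))\<^sup>2) \<le> Lhat\<^sup>2 * (norm (x - y))\<^sup>2"
    and convex_i: "\<And>i. i < n \<Longrightarrow> convex_on UNIV (f i)"
    and mu_nonneg: "\<mu> \<ge> 0"
    and Cy: "\<And>i. i < n \<Longrightarrow> unbiased_compressor (Qy i) (CDy i) \<omega>"
    and Cz: "\<And>i. i < n \<Longrightarrow> unbiased_compressor (Qz i) (CDz i) \<omega>"
    and CPc: "contractive_compressor QP CP \<alpha>"
    and Lb_pos: "Lb > 0" and p_pos: "0 < p" and p_le: "p \<le> 1"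
    and tau_pos: "0 < \<tau>"
    and beta_pos: "0 < \<beta>" and beta_le: "\<beta> \<le> 1 / (\<omega> + 1)"
    and Gs: "Gam s > 0"
  shows "(\<integral>\<xi>. (1 / real n) * (\<Sum>i<n. (norm (hv (fst (alg_step n gf CDy CDz CP Lb \<mu> p \<tau> \<beta> \<alpha> s \<xi>)) i
                 - gf i (zv (fst (alg_step n gf CDy CDz CP Lb \<mu> p \<tau> \<beta> \<alpha> s \<xi>)))))\<^sup>2) \<partial>step_measure n Qy QP p Qz)
        \<le> 8 * p * (1 + p / \<beta>) * Max (Li ` {..<n}) * bregman (avg_fun n f) (avg_fun n gf) (zv s) (y_next Lb \<mu> p \<tau> \<beta> \<alpha> s)
         + 4 * p * (1 + p / \<beta>) * Lhat\<^sup>2 * (\<integral>\<xi>. (norm (fst (snd (alg_step n gf CDy CDz CP Lb \<mu> p \<tau> \<beta> \<alpha> s \<xi>)) - y_next Lb \<mu> p \<tau> \<beta> \<alpha> s))\<^sup>2 \<partial>step_measure n Qy QP p Qz)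
         + (1 - \<beta> / 2) * ((1 / real n) * (\<Sum>i<n. (norm (hv s i - gf i (zv s)))\<^sup>2))"
proof -
  define S where "S = alg_step n gf CDy CDz CP Lb \<mu> p \<tau> \<beta> \<alpha> s"
  define \<theta> where "\<theta> = theta_next Lb \<mu> p (Gam s) (theta_min \<alpha> \<tau> \<beta> p)"
  define \<gamma> where "\<gamma> = p * \<theta> * Gam s / (1 - p * \<theta>)"
  define y where "y = y_next Lb \<mu> p \<tau> \<beta> \<alpha> s"
  define cc where "cc = (Lb + Gam s * \<mu>) / (2 * \<gamma>)"
  define gfun where "gfun ry = hbar s + (1 / real n) *\<^sub>R (\<Sum>i<n. CDy i (ry i) (gf i y - hv s i))" for ry :: "nat \<Rightarrow> 'r"
  define X where "X ry = \<theta> *\<^sub>R ((1 / (2 * cc + \<mu>)) *\<^sub>R ((2 * cc) *\<^sub>R uv s + \<mu> *\<^sub>R y - gfun ry)) + (1 - \<theta>) *\<^sub>R zv s" for ry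
  have alpha: "\<alpha> > 0" using CPc unfolding contractive_compressor_def by auto
  have tm: "0 < theta_min \<alpha> \<tau> \<beta> p" "theta_min \<alpha> \<tau> \<beta> p \<le> 1/4"
    using theta_min_props[OF alpha tau_pos beta_pos p_pos] by auto
  have th: "0 < \<theta>" "\<theta> \<le> 1/4" unfolding \<theta>_def using theta_props[OF Gs Lb_pos mu_nonneg p_pos tm] by auto
  have pth: "p * \<theta> \<le> 1/4" using th p_pos p_le mult_mono[of p 1 \<theta> "1/4"] by simp
  have gam: "\<gamma> > 0" unfolding \<gamma>_def using th pth p_pos Gs by (intro divide_pos_pos mult_pos_pos) auto
  have cc: "cc > 0" unfolding cc_def using gam Lb_pos Gs mu_nonneg by (intro divide_pos_pos add_pos_nonneg) auto
  have SX: "fst (snd (S (ry, rP, c, rz))) = X ry" for ry rP c rz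
  proof -
    have "fst (snd (S (ry, rP, c, rz))) = \<theta> *\<^sub>R (ARG_MIN (\<lambda>x. gfun ry \<bullet> x + cc * (norm (x - uv s))\<^sup>2 + \<mu> / 2 * (norm (x - y))\<^sup>2) x. True) + (1 - \<theta>) *\<^sub>R zv s"
      unfolding S_def gfun_def cc_def \<gamma>_def \<theta>_def y_def by (rule step_eqs(1)) (rule refl)+
    then show ?thesis unfolding X_def argmin_closed[OF cc mu_nonneg] .
  qed
  have SZ: "zv (fst (S (ry, rP, c, rz))) = (if c then X ry else zv s)" for ry rP c rz
  proof -
    have "zv (fst (S (ry, rP, c, rz))) = (if c then \<theta> *\<^sub>R (ARG_MIN (\<lambda>x. gfun ry \<bullet> x + cc * (norm (x - uv s))\<^sup>2 + \<mu> / 2 * (norm (x - y))\<^sup>2) x. True) + (1 - \<theta>) *\<^sub>R zv s else zv s)"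
      unfolding S_def gfun_def cc_def \<gamma>_def \<theta>_def y_def by (rule step_eqs(2)) (rule refl)+
    then show ?thesis unfolding X_def argmin_closed[OF cc mu_nonneg] .
  qed
  have SH: "hv (fst (S (ry, rP, c, rz))) = (\<lambda>i. hv s i + \<beta> *\<^sub>R CDz i (rz i) (gf i (if c then X ry else zv s) - hv s i))" for ry rP c rz
  proof -
    have "hv (fst (S (ry, rP, c, rz))) = (\<lambda>i. hv s i + \<beta> *\<^sub>R CDz i (rz i) (gf i (if c then \<theta> *\<^sub>R (ARG_MIN (\<lambda>x. gfun ry \<bullet> x + cc * (norm (x - uv s))\<^sup>2 + \<mu> / 2 * (norm (x - y))\<^sup>2) x. True) + (1 - \<theta>) *\<^sub>R zv s else zv s) - hv s i))"
      unfolding S_def gfun_def cc_def \<gamma>_def \<theta>_def y_def by (rule step_eqs(3)) (rule refl)+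
    then show ?thesis unfolding X_def argmin_closed[OF cc mu_nonneg] .
  qed
  define Y where "Y = PiM {..<n} Qy"
  define Z where "Z = PiM {..<n} Qz"
  define B where "B = measure_pmf (bernoulli_pmf p)"
  define R2 where "R2 = B \<Otimes>\<^sub>M Z"
  define R1 where "R1 = QP \<Otimes>\<^sub>M R2"
  define M where "M = step_measure n Qy QP p Qz"
  have M_eq: "M = Y \<Otimes>\<^sub>M R1" unfolding M_def step_measure_def Y_def R1_def R2_def B_def Z_def ..
  have PY: "prob_space Y" unfolding Y_def using Cy by (intro prob_space_PiM) (auto simp: unbiased_compressor_def)
  have PZ: "prob_space Z" unfolding Z_def using Cz by (intro prob_space_PiM) (auto simp: unbiased_compressor_def)
  have PP: "prob_space QP" using CPc unfolding contractive_compressor_def by auto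
  have PB: "prob_space B" unfolding B_def by (rule prob_space_measure_pmf)
  have PR2: "prob_space R2" unfolding R2_def using PB PZ by (rule prob_space_pair)
  have PR1: "prob_space R1" unfolding R1_def using PP PR2 by (rule prob_space_pair)
  have PM: "prob_space M" unfolding M_eq using PY PR1 by (rule prob_space_pair)
  define A where "A w = (1 / real n) * (\<Sum>i<n. (norm (hv s i - gf i w))\<^sup>2)" for w
  define \<Phi> where "\<Phi> \<xi> = (1 / real n) * (\<Sum>i<n. (norm (hv (fst (S \<xi>)) i - gf i (zv (fst (S \<xi>)))))\<^sup>2)" for \<xi>
  define Q where "Q ry = (norm (X ry - y))\<^sup>2" for ry
  define K where "K = 4 * p * (1 + p / \<beta>) * Lhat\<^sup>2"
  define R0 where "R0 = 8 * p * (1 + p / \<beta>) * Max (Li ` {..<n}) * bregman (avg_fun n f) (avg_fun n gf) (zv s) y + (1 - \<beta> / 2) * A (zv s)"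
  have om: "\<omega> \<ge> 0" using Cy[of 0] n_pos unfolding unbiased_compressor_def by auto
  have beta1: "\<beta> \<le> 1"
  proof -
    have "\<beta> + \<beta> * \<omega> \<le> 1" using beta_le om by (simp add: field_simps)
    moreover have "\<beta> * \<omega> \<ge> 0" using beta_pos om by simp
    ultimately show ?thesis by linarith
  qed
  have A0: "A w \<ge> 0" for w unfolding A_def by (auto intro!: sum_nonneg divide_nonneg_nonneg)
  have pw: "(1 - \<beta>) * ((1 - p) * A (zv s) + p * A x) \<le> R0 + K * (norm (x - y))\<^sup>2" for x
    using pointwise_bound[OF n_pos grad smooth_i Li Lhat convex_i beta_pos beta1 p_pos p_le, of "hv s" "zv s" x y]
    unfolding A_def R0_def K_def by simp
  have R0: "R0 \<ge> 0"
  proof -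
    have "0 \<le> (1 - \<beta>) * ((1 - p) * A (zv s) + p * A y)" using A0 beta1 p_le p_pos by auto
    then show ?thesis using pw[of y] by simp
  qed
  have K: "K \<ge> 0" unfolding K_def using p_pos beta_pos by auto
  have LHS: "(\<integral>\<xi>. \<Phi> \<xi> \<partial>M) \<le> R0 + K * (\<integral>\<xi>. (norm (fst (snd (S \<xi>)) - y))\<^sup>2 \<partial>M)"
  proof -
    define e where "e i = gf i y - hv s i" for i
    define \<kappa> where "\<kappa> = - (\<theta> / (2 * cc + \<mu>)) * (1 / real n)"
    define w0 where "w0 = (\<theta> / (2 * cc + \<mu>)) *\<^sub>R ((2 * cc) *\<^sub>R uv s + \<mu> *\<^sub>R y - hbar s) + (1 - \<theta>) *\<^sub>R zv s - y"
    have Xeq: "X ry - y = w0 + \<kappa> *\<^sub>R (\<Sum>i<n. CDy i (ry i) (e i))" for ry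
      unfolding X_def gfun_def w0_def \<kappa>_def e_def by (simp add: algebra_simps)
    have Cm: "(\<lambda>ry. CDy i (ry i) (e i)) \<in> borel_measurable Y" if "i < n" for i
    proof -
      have "(\<lambda>r. CDy i r (e i)) \<in> borel_measurable (Qy i)"
        using Cy[OF that] unfolding unbiased_compressor_def by (auto intro: borel_measurable_integrable)
      then show ?thesis unfolding Y_def
        using measurable_compose[OF measurable_component_singleton[of i "{..<n}" Qy]] that by auto
    qed
    have Csq: "integrable Y (\<lambda>ry. (norm (CDy i (ry i) (e i)))\<^sup>2)" if "i < n" for i
    proof -
      interpret Pi: prob_space "Qy i" using Cy[OF that] unfolding unbiased_compressor_def by auto
      have m1: "(\<lambda>r. CDy i r (e i) - e i) \<in> borel_measurable (Qy i)"
        using Cy[OF that] unfolding unbiased_compressor_def by (auto intro: borel_measurable_integrable)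
      have "integrable (Qy i) (\<lambda>r. (norm (CDy i r (e i) - e i + e i))\<^sup>2)"
        using Cy[OF that] unfolding unbiased_compressor_def
        by (intro sq_integrable_add m1) auto
      then have "integrable (Qy i) (\<lambda>r. (norm (CDy i r (e i)))\<^sup>2)" by simp
      then show ?thesis unfolding Y_def
        using Cy that by (intro integrable_PiM_comp[where I="{..<n}" and M=Qy and f="\<lambda>r. (norm (CDy i r (e i)))\<^sup>2"])
          (auto simp: unbiased_compressor_def)
    qed
    have Sm: "(\<lambda>ry. \<kappa> *\<^sub>R (\<Sum>i<n. CDy i (ry i) (e i))) \<in> borel_measurable Y"
      using Cm by (intro borel_measurable_scaleR borel_measurable_const borel_measurable_sum) auto
    have Ssq: "integrable Y (\<lambda>ry. (norm (\<kappa> *\<^sub>R (\<Sum>i<n. CDy i (ry i) (e i))))\<^sup>2)"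
    proof -
      have "integrable Y (\<lambda>ry. \<kappa>\<^sup>2 * (norm (\<Sum>i<n. CDy i (ry i) (e i)))\<^sup>2)"
        using Cm Csq by (intro integrable_mult_right sq_integrable_sum) auto
      then show ?thesis by (simp add: power_mult_distrib)
    qed
    have Qeq: "Q = (\<lambda>ry. (norm (w0 + \<kappa> *\<^sub>R (\<Sum>i<n. CDy i (ry i) (e i))))\<^sup>2)"
      unfolding Q_def Xeq by simp
    have Qint: "integrable Y Q"
    proof -
      interpret PYi: prob_space Y by (rule PY)
      show ?thesis unfolding Qeq by (intro sq_integrable_add Sm Ssq) auto
    qed
    have Qm: "Q \<in> borel_measurable Y" using Qint by (rule borel_measurable_integrable)
    have RHSint: "(\<integral>\<xi>. (norm (fst (snd (S \<xi>)) - y))\<^sup>2 \<partial>M) = (\<integral>ry. Q ry \<partial>Y)"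
    proof -
      have "(\<integral>\<xi>. (norm (fst (snd (S \<xi>)) - y))\<^sup>2 \<partial>M) = (\<integral>\<xi>. Q (fst \<xi>) \<partial>M)"
        by (rule Bochner_Integration.integral_cong[OF refl]) (auto simp: Q_def SX split: prod.splits)
      also have "\<dots> = (\<integral>ry. Q ry \<partial>Y)" unfolding M_eq by (rule integral_pair_fst[OF PR1 Qm])
      finally show ?thesis .
    qed
    show ?thesis
    proof (cases "integrable M \<Phi>")
      case False
      then have "(\<integral>\<xi>. \<Phi> \<xi> \<partial>M) = 0" by (rule not_integrable_integral_eq)
      moreover have "0 \<le> (\<integral>\<xi>. (norm (fst (snd (S \<xi>)) - y))\<^sup>2 \<partial>M)" by (rule Bochner_Integration.integral_nonneg) simp
      ultimately show ?thesis using R0 K by simp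
    next
      case True
      interpret PYi: prob_space Y by (rule PY)
      have \<Phi>m: "\<Phi> \<in> borel_measurable M" using True by (rule borel_measurable_integrable)
      have \<Phi>0: "\<Phi> \<xi> \<ge> 0" for \<xi> unfolding \<Phi>_def by (auto intro!: sum_nonneg divide_nonneg_nonneg)
      have em: "(\<lambda>\<xi>. ennreal (\<Phi> \<xi>)) \<in> borel_measurable (Y \<Otimes>\<^sub>M R1)" using \<Phi>m unfolding M_eq by measurable
      define G where "G ry = (1 - \<beta>) * ((1 - p) * A (zv s) + p * A (X ry))" for ry
      have inner: "(\<integral>\<^sup>+r1. ennreal (\<Phi> (ry, r1)) \<partial>R1) \<le> ennreal (G ry)" if ry: "ry \<in> space Y" for ry
      proof -
        have em1: "(\<lambda>r1. ennreal (\<Phi> (ry, r1))) \<in> borel_measurable (QP \<Otimes>\<^sub>M R2)"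
          using measurable_Pair2[OF em ry] unfolding R1_def .
        have inner2: "(\<integral>\<^sup>+r2. ennreal (\<Phi> (ry, rP, r2)) \<partial>R2) \<le> ennreal (G ry)" if rP: "rP \<in> space QP" for rP
        proof -
          have em2: "(\<lambda>r2. ennreal (\<Phi> (ry, rP, r2))) \<in> borel_measurable (B \<Otimes>\<^sub>M Z)"
            using measurable_Pair2[OF em1 rP] unfolding R2_def .
          have zb: "(\<integral>\<^sup>+rz. ennreal (\<Phi> (ry, rP, c, rz)) \<partial>Z) \<le> ennreal ((1 - \<beta>) * A (if c then X ry else zv s))" for c
          proof -
            define z' where "z' = (if c then X ry else zv s)"
            have eq: "\<Phi> (ry, rP, c, rz) = (1 / real n) * (\<Sum>i<n. (norm (\<beta> *\<^sub>R CDz i (rz i) (gf i z' - hv s i) - (gf i z' - hv s i)))\<^sup>2)" for rz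
              unfolding \<Phi>_def SH SZ z'_def[symmetric]
              by (intro arg_cong[where f="\<lambda>x. (1 / real n) * x"] sum.cong refl) (simp add: algebra_simps)
            have "(\<integral>\<^sup>+rz. ennreal (\<Phi> (ry, rP, c, rz)) \<partial>Z)
                = (\<integral>\<^sup>+rz. ennreal ((1 / real n) * (\<Sum>i<n. (norm (\<beta> *\<^sub>R CDz i (rz i) (gf i z' - hv s i) - (gf i z' - hv s i)))\<^sup>2)) \<partial>Z)"
              by (simp only: eq)
            also have "\<dots> \<le> ennreal ((1 - \<beta>) * ((1 / real n) * (\<Sum>i<n. (norm (gf i z' - hv s i))\<^sup>2)))"
              unfolding Z_def by (rule Zbound[OF Cz beta_pos beta_le])
            also have "\<dots> = ennreal ((1 - \<beta>) * A z')" unfolding A_def by (simp add: norm_minus_commute)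
            finally show ?thesis unfolding z'_def .
          qed
          have nn1: "0 \<le> (1 - \<beta>) * A (X ry)" and nn2: "0 \<le> (1 - \<beta>) * A (zv s)" using beta1 A0 by auto
          have "(\<integral>\<^sup>+r2. ennreal (\<Phi> (ry, rP, r2)) \<partial>R2) = (\<integral>\<^sup>+c. \<integral>\<^sup>+rz. ennreal (\<Phi> (ry, rP, c, rz)) \<partial>Z \<partial>B)"
            unfolding R2_def using sigma_finite_measure.nn_integral_fst[OF prob_space_imp_sigma_finite[OF PZ] em2] by simp
          also have "\<dots> \<le> (\<integral>\<^sup>+c. ennreal ((1 - \<beta>) * A (if c then X ry else zv s)) \<partial>B)"
            by (intro nn_integral_mono zb)
          also have "\<dots> = ennreal ((1 - \<beta>) * A (X ry)) * ennreal p + ennreal ((1 - \<beta>) * A (zv s)) * ennreal (1 - p)"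
            unfolding B_def using p_pos p_le by (subst nn_integral_bernoulli_pmf) auto
          also have "\<dots> = ennreal ((1 - \<beta>) * A (X ry) * p + (1 - \<beta>) * A (zv s) * (1 - p))"
            using nn1 nn2 p_pos p_le by (simp add: ennreal_mult ennreal_plus del: ennreal_plus_if)
          also have "\<dots> = ennreal (G ry)" unfolding G_def by (simp add: algebra_simps)
          finally show ?thesis .
        qed
        have "(\<integral>\<^sup>+r1. ennreal (\<Phi> (ry, r1)) \<partial>R1) = (\<integral>\<^sup>+rP. \<integral>\<^sup>+r2. ennreal (\<Phi> (ry, rP, r2)) \<partial>R2 \<partial>QP)"
          unfolding R1_def using sigma_finite_measure.nn_integral_fst[OF prob_space_imp_sigma_finite[OF PR2] em1] by simp
        also have "\<dots> \<le> (\<integral>\<^sup>+rP. ennreal (G ry) \<partial>QP)" by (intro nn_integral_mono inner2)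
        also have "\<dots> = ennreal (G ry)" using prob_space.emeasure_space_1[OF PP] by simp
        finally show ?thesis .
      qed
      have iR: "integrable Y (\<lambda>ry. R0 + K * Q ry)" using Qint by simp
      have "(\<integral>\<^sup>+\<xi>. ennreal (\<Phi> \<xi>) \<partial>M) = (\<integral>\<^sup>+ry. \<integral>\<^sup>+r1. ennreal (\<Phi> (ry, r1)) \<partial>R1 \<partial>Y)"
        unfolding M_eq using sigma_finite_measure.nn_integral_fst[OF prob_space_imp_sigma_finite[OF PR1] em] by simp
      also have "\<dots> \<le> (\<integral>\<^sup>+ry. ennreal (G ry) \<partial>Y)" by (intro nn_integral_mono inner)
      also have "\<dots> \<le> (\<integral>\<^sup>+ry. ennreal (R0 + K * Q ry) \<partial>Y)"
        by (intro nn_integral_mono ennreal_leI) (use pw in \<open>simp add: G_def Q_def\<close>)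
      also have "\<dots> = ennreal (\<integral>ry. R0 + K * Q ry \<partial>Y)"
        using iR R0 K by (intro nn_integral_eq_integral AE_I2) (auto simp: Q_def)
      also have "(\<integral>ry. R0 + K * Q ry \<partial>Y) = R0 + K * (\<integral>ry. Q ry \<partial>Y)" using Qint by (simp add: PYi.prob_space)
      finally have nnb: "(\<integral>\<^sup>+\<xi>. ennreal (\<Phi> \<xi>) \<partial>M) \<le> ennreal (R0 + K * (\<integral>ry. Q ry \<partial>Y))" .
      have IQ: "(\<integral>ry. Q ry \<partial>Y) \<ge> 0" by (rule Bochner_Integration.integral_nonneg) (simp add: Q_def)
      have "(\<integral>\<xi>. \<Phi> \<xi> \<partial>M) = enn2real (\<integral>\<^sup>+\<xi>. ennreal (\<Phi> \<xi>) \<partial>M)"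
        by (rule integral_eq_nn_integral[OF \<Phi>m]) (auto intro: AE_I2 \<Phi>0)
      also have "\<dots> \<le> enn2real (ennreal (R0 + K * (\<integral>ry. Q ry \<partial>Y)))" by (rule enn2real_mono[OF nnb]) simp
      also have "\<dots> = R0 + K * (\<integral>ry. Q ry \<partial>Y)" by (rule enn2real_ennreal) (use R0 K IQ in simp)
      finally show ?thesis unfolding RHSint .
    qed
  qed
  then show ?thesis unfolding \<Phi>_def M_def S_def R0_def K_def y_def A_def by (simp add: algebra_simps)
qed


lemma gam_run:
  fixes gf :: "nat \<Rightarrow> 'a::euclidean_space \<Rightarrow> 'a" and CDy CDz :: "nat \<Rightarrow> 'r \<Rightarrow> 'a \<Rightarrow> 'a"
  assumes G0: "\<Gamma>0 \<ge> 1" and Lb: "Lb > 0" and mu: "\<mu> \<ge> 0" and p: "p > 0" "p \<le> 1"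
    and a: "\<alpha> > 0" and ta: "\<tau> > 0" and b: "\<beta> > 0"
  shows "Gam (alg_run n gf CDy CDz CP Lb \<mu> p \<tau> \<beta> \<alpha> (alg_init n \<Gamma>0 x0 h0 k0 v0) \<Xi> t) \<ge> 1"
proof (induction t)
  case 0
  then show ?case using G0 by (simp add: alg_init_def)
next
  case (Suc t)
  define s where "s = alg_run n gf CDy CDz CP Lb \<mu> p \<tau> \<beta> \<alpha> (alg_init n \<Gamma>0 x0 h0 k0 v0) \<Xi> t"
  obtain ry rP c rz where xi: "\<Xi> t = (ry, rP, c, rz)" by (cases "\<Xi> t") auto
  define \<theta> where "\<theta> = theta_next Lb \<mu> p (Gam s) (theta_min \<alpha> \<tau> \<beta> p)"
  have Gs: "Gam s \<ge> 1" using Suc unfolding s_def .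
  have tm: "0 < theta_min \<alpha> \<tau> \<beta> p" "theta_min \<alpha> \<tau> \<beta> p \<le> 1/4"
    using theta_min_props[OF a ta b p(1)] by auto
  have th: "0 < \<theta>" "\<theta> \<le> 1/4" unfolding \<theta>_def using theta_props[OF _ Lb mu p(1) tm] Gs by auto
  have pth: "p * \<theta> \<le> 1/4" using th p mult_mono[of p 1 \<theta> "1/4"] by simp
  have gam: "p * \<theta> * Gam s / (1 - p * \<theta>) \<ge> 0" using th pth p Gs by (intro divide_nonneg_nonneg mult_nonneg_nonneg) auto
  have "Gam (fst (alg_step n gf CDy CDz CP Lb \<mu> p \<tau> \<beta> \<alpha> s (\<Xi> t))) = Gam s + p * \<theta> * Gam s / (1 - p * \<theta>)"
    unfolding \<theta>_def by (rule step_eqs(4)[OF xi]) (rule refl)+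
  then show ?case using Gs gam unfolding s_def by simp
qed

theorem lemma7:
  fixes n :: nat
    and f :: "nat \<Rightarrow> 'a::euclidean_space \<Rightarrow> real" and gf :: "nat \<Rightarrow> 'a \<Rightarrow> 'a"
    and Li :: "nat \<Rightarrow> real" and Lhat L \<mu> :: real and xstar :: 'a
    and Qy Qz :: "nat \<Rightarrow> 'r measure" and QP :: "'r measure"
    and CDy CDz :: "nat \<Rightarrow> 'r \<Rightarrow> 'a \<Rightarrow> 'a" and CP :: "'r \<Rightarrow> 'a \<Rightarrow> 'a"
    and \<omega> \<alpha> Lb p \<Gamma>0 \<tau> \<beta> :: real
    and x0 k0 v0 :: 'a and h0 :: "nat \<Rightarrow> 'a"
    and \<Xi> :: "nat \<Rightarrow> 'r seeds" and t :: nat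
  assumes n_pos: "n \<ge> 1"
    and grad: "\<And>i x. i < n \<Longrightarrow> (f i has_derivative (\<lambda>h. gf i x \<bullet> h)) (at x)"
    \<comment> \<open>Assumption 1\<close>
    and smooth_i: "\<And>i x y. i < n \<Longrightarrow> norm (gf i x - gf i y) \<le> Li i * norm (x - y)"
    and Lhat_pos: "Lhat > 0"
    and Lhat: "\<And>x y. (1 / real n) * (\<Sum>i<n. (norm (gf i x - gf i y))\<^sup>2) \<le> Lhat\<^sup>2 * (norm (x - y))\<^sup>2"
    \<comment> \<open>Assumption 2\<close>
    and smooth: "\<And>x y. norm (avg_fun n gf x - avg_fun n gf y) \<le> L * norm (x - y)"
    \<comment> \<open>Assumption 3\<close>
    and convex_i: "\<And>i. i < n \<Longrightarrow> convex_on UNIV (f i)"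
    and mu_nonneg: "\<mu> \<ge> 0"
    and strongly: "strongly_convex \<mu> (avg_fun n f)"
    and minimizer: "\<And>x. avg_fun n f xstar \<le> avg_fun n f x"
    \<comment> \<open>compressor classes; Assumption 4 (independence) is encoded by the product measure step_measure\<close>
    and Cy: "\<And>i. i < n \<Longrightarrow> unbiased_compressor (Qy i) (CDy i) \<omega>"
    and Cz: "\<And>i. i < n \<Longrightarrow> unbiased_compressor (Qz i) (CDz i) \<omega>"
    and CPc: "contractive_compressor QP CP \<alpha>"
    \<comment> \<open>parameters\<close>
    and Lb_pos: "Lb > 0" and p_pos: "0 < p" and p_le: "p \<le> 1" and \<Gamma>0: "\<Gamma>0 \<ge> 1"
    and tau_pos: "0 < \<tau>" and tau_le: "\<tau> \<le> 1"
    and beta_pos: "0 < \<beta>" and beta_le: "\<beta> \<le> 1 / (\<omega> + 1)"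
  shows
   "(let s = alg_run n gf CDy CDz CP Lb \<mu> p \<tau> \<beta> \<alpha> (alg_init n \<Gamma>0 x0 h0 k0 v0) \<Xi> t;
         S = alg_step n gf CDy CDz CP Lb \<mu> p \<tau> \<beta> \<alpha> s;
         y = y_next Lb \<mu> p \<tau> \<beta> \<alpha> s;
         M = step_measure n Qy QP p Qz;
         Lmax = Max (Li ` {..<n})
     in (\<integral>\<xi>. (1 / real n) * (\<Sum>i<n. (norm (hv (fst (S \<xi>)) i - gf i (zv (fst (S \<xi>)))))\<^sup>2) \<partial>M)
        \<le> 8 * p * (1 + p / \<beta>) * Lmax * bregman (avg_fun n f) (avg_fun n gf) (zv s) y
         + 4 * p * (1 + p / \<beta>) * Lhat\<^sup>2 * (\<integral>\<xi>. (norm (fst (snd (S \<xi>)) - y))\<^sup>2 \<partial>M)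
         + (1 - \<beta> / 2) * ((1 / real n) * (\<Sum>i<n. (norm (hv s i - gf i (zv s)))\<^sup>2)))"
proof -
  have alpha: "\<alpha> > 0" using CPc unfolding contractive_compressor_def by auto
  have Li: "Li i \<ge> 0" if "i < n" for i
  proof -
    obtain b :: 'a where bB: "b \<in> Basis" using nonempty_Basis by blast
    have "norm (gf i b - gf i 0) \<le> Li i" using smooth_i[OF that, of b 0] bB by simp
    then show ?thesis using norm_ge_zero[of "gf i b - gf i 0"] by linarith
  qed
  have Gs: "Gam (alg_run n gf CDy CDz CP Lb \<mu> p \<tau> \<beta> \<alpha> (alg_init n \<Gamma>0 x0 h0 k0 v0) \<Xi> t) > 0"
    using gam_run[OF \<Gamma>0 Lb_pos mu_nonneg p_pos p_le alpha tau_pos beta_pos] by (smt (verit))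
  show ?thesis unfolding Let_def
    by (rule main_bound[OF n_pos grad smooth_i Li Lhat convex_i mu_nonneg Cy Cz CPc Lb_pos p_pos p_le tau_pos beta_pos beta_le Gs])
qed


end
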